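(* Let $(S,\mu)$ be a $\sigma$-finite measure space. Every uniformly integrable set of graphons in $L^1(S\times S,\mu\times\mu)$ is relatively complete for the cut norm, i.e. every sequence in the set that is Cauchy for $\|\cdot\|_\square$ converges in $\|\cdot\|_\square$ to some graphon on $(S,\mu)$.
   Context: A graphon on $(S,\mu)$ is a symmetric function $W\in L^1(S\times S,\mu\times\mu)$; functions equal a.e. are identified. Cut norm: $\|F\|_\square:=\sup_{T,U}|\int_{T\times U}F\,d\mu\,d\mu|$ over measurable $T,U\subseteq S$. A set $\mathcal A$ of integrable functions is uniformly integrable if (UI1) $\sup_{F\in\mathcal A}\int|F|<\infty$ and (UI2) $\sup_{F\in\mathcal A}\int_{|F|>B}|F|\to0$ as $B\to\infty$. *)

theory Defs
  imports "HOL-Analysis.Analysis"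
begin

text \<open>A graphon on (S,mu): a symmetric integrable real function on S x S
  (symmetry up to null sets, since functions equal a.e. are identified).\<close>
definition graphon :: "'a measure \<Rightarrow> ('a \<times> 'a \<Rightarrow> real) \<Rightarrow> bool" where
  "graphon M W \<longleftrightarrow> integrable (M \<Otimes>\<^sub>M M) W \<and>
     (AE z in M \<Otimes>\<^sub>M M. W (snd z, fst z) = W z)"

definition cut_norm :: "'a measure \<Rightarrow> ('a \<times> 'a \<Rightarrow> real) \<Rightarrow> real" where
  "cut_norm M F = (SUP TU \<in> sets M \<times> sets M.
      \<bar>LINT z:(fst TU \<times> snd TU)|(M \<Otimes>\<^sub>M M). F z\<bar>)"

definition unif_integrable :: "'a measure \<Rightarrow> ('a \<times> 'a \<Rightarrow> real) set \<Rightarrow> bool" where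
  "unif_integrable M A \<longleftrightarrow>
     (\<exists>C. \<forall>F\<in>A. (LINT z|(M \<Otimes>\<^sub>M M). \<bar>F z\<bar>) \<le> C) \<and>
     (\<forall>e>0. \<exists>B0. \<forall>B\<ge>B0. \<forall>F\<in>A.
        (LINT z:{z \<in> space (M \<Otimes>\<^sub>M M). \<bar>F z\<bar> > B}|(M \<Otimes>\<^sub>M M). \<bar>F z\<bar>) \<le> e)"

end

theory Submission imports Defs begin

lemma set_int_abs_le:
  fixes f :: "'b \<Rightarrow> real"
  assumes "integrable N f" "E \<in> sets N"
  shows "\<bar>LINT z:E|N. f z\<bar> \<le> (LINT z|N. \<bar>f z\<bar>)"
proof -
  have "\<bar>LINT z:E|N. f z\<bar> \<le> (LINT z|N. \<bar>indicator E z *\<^sub>R f z\<bar>)"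
    unfolding set_lebesgue_integral_def by (rule integral_abs_bound)
  also have "\<dots> \<le> (LINT z|N. \<bar>f z\<bar>)"
    using assms by (intro integral_mono integrable_abs integrable_mult_indicator)
       (auto split: split_indicator)
  finally show ?thesis .
qed

lemma cut_rect:
  assumes "integrable (M \<Otimes>\<^sub>M M) F" "T \<in> sets M" "U \<in> sets M"
  shows "\<bar>LINT z:T\<times>U|(M \<Otimes>\<^sub>M M). F z\<bar> \<le> cut_norm M F"
  unfolding cut_norm_def
proof -
  have "\<bar>LINT z:T\<times>U|(M \<Otimes>\<^sub>M M). F z\<bar> = (\<lambda>TU. \<bar>LINT z:(fst TU \<times> snd TU)|(M \<Otimes>\<^sub>M M). F z\<bar>) (T,U)"
    by simp
  also have "\<dots> \<le> (SUP TU \<in> sets M \<times> sets M. \<bar>LINT z:(fst TU \<times> snd TU)|(M \<Otimes>\<^sub>M M). F z\<bar>)"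
    using assms by (intro cSUP_upper bdd_aboveI2[where M="LINT z|(M \<Otimes>\<^sub>M M). \<bar>F z\<bar>"])
      (auto intro!: set_int_abs_le)
  finally show "\<bar>LINT z:T\<times>U|(M \<Otimes>\<^sub>M M). F z\<bar> \<le> (SUP TU \<in> sets M \<times> sets M. \<bar>LINT z:(fst TU \<times> snd TU)|(M \<Otimes>\<^sub>M M). F z\<bar>)" .
qed

lemma cut_le:
  assumes "\<And>T U. T \<in> sets M \<Longrightarrow> U \<in> sets M \<Longrightarrow> \<bar>LINT z:T\<times>U|(M \<Otimes>\<^sub>M M). F z\<bar> \<le> e"
  shows "cut_norm M F \<le> e"
  unfolding cut_norm_def using assms by (intro cSUP_least) auto

lemma cut_nonneg:
  assumes "integrable (M \<Otimes>\<^sub>M M) F"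
  shows "0 \<le> cut_norm M F"
  using cut_rect[OF assms, of "{}" "{}"] by simp

lemma set_int_abs_le2:
  fixes f :: "'b \<Rightarrow> real"
  shows "\<bar>LINT z:E|N. f z\<bar> \<le> (LINT z:E|N. \<bar>f z\<bar>)"
  unfolding set_lebesgue_integral_def
  using integral_abs_bound[of N "\<lambda>z. indicator E z *\<^sub>R f z"]
  by (simp add: abs_mult)

lemma ennreal_add_le: "ennreal (a + b) \<le> ennreal a + ennreal b"
proof (cases "a \<ge> 0 \<and> b \<ge> 0")
  case True then show ?thesis by (simp add: ennreal_plus)
next
  case False
  then consider "a < 0" | "b < 0" by linarith
  then show ?thesis
  proof cases
    case 1
    then have "ennreal (a + b) \<le> ennreal b" by (intro ennreal_leI) simp
    also have "ennreal b \<le> ennreal a + ennreal b" by (rule add_increasing) simp_all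
    finally show ?thesis .
  next
    case 2
    then have "ennreal (a + b) \<le> ennreal a" by (intro ennreal_leI) simp
    also have "ennreal a \<le> ennreal a + ennreal b" by (rule add_increasing2) simp_all
    finally show ?thesis .
  qed
qed

lemma ennreal_sums_le:
  fixes f :: "nat \<Rightarrow> real"
  assumes "f sums s"
  shows "ennreal s \<le> (\<Sum>i. ennreal (f i))"
proof -
  have "(\<lambda>n. ennreal (\<Sum>i<n. f i)) \<longlonglongrightarrow> ennreal s" using assms unfolding sums_def by (rule tendsto_ennrealI)
  moreover have "ennreal (\<Sum>i<n. f i) \<le> (\<Sum>i. ennreal (f i))" for n
  proof -
    have "ennreal (\<Sum>i<n. f i) \<le> (\<Sum>i<n. ennreal (f i))"
    proof (induct n)
      case 0 then show ?case by simp
    next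
      case (Suc n)
      have "ennreal (\<Sum>i<Suc n. f i) = ennreal ((\<Sum>i<n. f i) + f n)" by simp
      also have "\<dots> \<le> ennreal (\<Sum>i<n. f i) + ennreal (f n)" by (rule ennreal_add_le)
      also have "\<dots> \<le> (\<Sum>i<n. ennreal (f i)) + ennreal (f n)" using Suc by (rule add_right_mono)
      finally show ?case by simp
    qed
    also have "\<dots> \<le> (\<Sum>i. ennreal (f i))" by (rule sum_le_suminf) auto
    finally show ?thesis .
  qed
  ultimately show ?thesis by (intro LIMSEQ_le_const2) auto
qed

lemma jordan:
  fixes L :: "'b set \<Rightarrow> real" and Fn :: "'b set set"
  assumes FS: "Fn \<subseteq> S"
  and F_int: "\<And>F E. F \<in> Fn \<Longrightarrow> E \<in> S \<Longrightarrow> F \<inter> E \<in> Fn"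
  and F_Un: "\<And>F G. F \<in> Fn \<Longrightarrow> G \<in> Fn \<Longrightarrow> F \<union> G \<in> Fn"
  and F_empty: "{} \<in> Fn"
  and add: "\<And>F G. F \<in> Fn \<Longrightarrow> G \<in> Fn \<Longrightarrow> F \<inter> G = {} \<Longrightarrow> L (F \<union> G) = L F + L G"
  and cadd: "\<And>X. range X \<subseteq> Fn \<Longrightarrow> disjoint_family X \<Longrightarrow> (\<Union>i. X i) \<in> Fn \<Longrightarrow> (\<lambda>i. L (X i)) sums L (\<Union>i. X i)"
  and Ssig: "sigma_algebra \<Omega> S"
  shows "positive S (\<lambda>E. SUP F \<in> {F \<in> Fn. F \<subseteq> E}. ennreal (L F))"
    "countably_additive S (\<lambda>E. SUP F \<in> {F \<in> Fn. F \<subseteq> E}. ennreal (L F))"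
proof -
  define \<nu> where "\<nu> E = (SUP F \<in> {F \<in> Fn. F \<subseteq> E}. ennreal (L F))" for E
  have L0: "L {} = 0" using add[OF F_empty F_empty] by simp
  have "{F \<in> Fn. F \<subseteq> {}} = {{}}" using F_empty by auto
  then show "positive S (\<lambda>E. SUP F \<in> {F \<in> Fn. F \<subseteq> E}. ennreal (L F))"
    unfolding positive_def using L0 by simp
  have upper: "F \<in> Fn \<Longrightarrow> F \<subseteq> E \<Longrightarrow> ennreal (L F) \<le> \<nu> E" for F E
    unfolding \<nu>_def by (intro SUP_upper) auto
  have mono: "X \<subseteq> Y \<Longrightarrow> \<nu> X \<le> \<nu> Y" for X Y
    unfolding \<nu>_def by (intro SUP_subset_mono) auto
  have ne: "{F \<in> Fn. F \<subseteq> E} \<noteq> {}" for E using F_empty by auto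
  have superadd: "\<nu> X + \<nu> Y \<le> \<nu> (X \<union> Y)" if XY: "X \<inter> Y = {}" for X Y
  proof -
    have "\<nu> X + \<nu> Y = (SUP F \<in> {F \<in> Fn. F \<subseteq> X}. ennreal (L F) + \<nu> Y)"
      unfolding \<nu>_def by (rule ennreal_SUP_add_left[symmetric, OF ne])
    also have "\<dots> \<le> \<nu> (X \<union> Y)"
    proof (rule SUP_least)
      fix F assume F: "F \<in> {F \<in> Fn. F \<subseteq> X}"
      have "ennreal (L F) + \<nu> Y = (SUP G \<in> {F \<in> Fn. F \<subseteq> Y}. ennreal (L F) + ennreal (L G))"
        unfolding \<nu>_def by (rule ennreal_SUP_add_right[OF ne])
      also have "\<dots> \<le> \<nu> (X \<union> Y)"
      proof (rule SUP_least)
        fix G assume G: "G \<in> {F \<in> Fn. F \<subseteq> Y}"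
        show "ennreal (L F) + ennreal (L G) \<le> \<nu> (X \<union> Y)"
        proof (cases "L F \<ge> 0 \<and> L G \<ge> 0")
          case True
          have "F \<inter> G = {}" using F G XY by auto
          then have "ennreal (L F) + ennreal (L G) = ennreal (L (F \<union> G))"
            using F G True add by (simp add: ennreal_plus)
          also have "\<dots> \<le> \<nu> (X \<union> Y)" using F G F_Un by (intro upper) auto
          finally show ?thesis .
        next
          case False
          then consider "L F < 0" | "L G < 0" by linarith
          then show ?thesis
          proof cases
            case 1
            then have "ennreal (L F) = 0" by (simp add: ennreal_eq_0_iff)
            then show ?thesis using G by (auto intro!: upper)
          next
            case 2
            then have "ennreal (L G) = 0" by (simp add: ennreal_eq_0_iff)
            then show ?thesis using F by (auto intro!: upper)
          qed
        qed
      qed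
      finally show "ennreal (L F) + \<nu> Y \<le> \<nu> (X \<union> Y)" .
    qed
    finally show ?thesis .
  qed
  show "countably_additive S (\<lambda>E. SUP F \<in> {F \<in> Fn. F \<subseteq> E}. ennreal (L F))"
    unfolding countably_additive_def \<nu>_def[symmetric]
  proof (intro allI impI)
    fix A :: "nat \<Rightarrow> 'b set" assume A: "range A \<subseteq> S" "disjoint_family A" "\<Union> (range A) \<in> S"
    have fin: "(\<Sum>i<n. \<nu> (A i)) \<le> \<nu> (\<Union>i<n. A i)" for n
    proof (induct n)
      case 0 then show ?case by simp
    next
      case (Suc n)
      have "(\<Sum>i<Suc n. \<nu> (A i)) = (\<Sum>i<n. \<nu> (A i)) + \<nu> (A n)" by simp
      also have "\<dots> \<le> \<nu> (\<Union>i<n. A i) + \<nu> (A n)" using Suc by (rule add_right_mono)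
      also have "\<dots> \<le> \<nu> ((\<Union>i<n. A i) \<union> A n)"
      proof (intro superadd equals0I)
        fix x assume "x \<in> (\<Union>i<n. A i) \<inter> A n"
        then obtain i where i: "i < n" "x \<in> A i" "x \<in> A n" by blast
        then have "i \<noteq> n" by simp
        then have "A i \<inter> A n = {}" using A(2) by (simp add: disjoint_family_on_def)
        then show False using i by blast
      qed
      also have "(\<Union>i<n. A i) \<union> A n = (\<Union>i<Suc n. A i)" using lessThan_Suc by auto
      finally show ?case .
    qed
    have le1: "(\<Sum>i. \<nu> (A i)) \<le> \<nu> (\<Union> (range A))"
      unfolding suminf_eq_SUP
    proof (rule SUP_least)
      fix n show "(\<Sum>i<n. \<nu> (A i)) \<le> \<nu> (\<Union> (range A))"
        using fin[of n] mono[of "\<Union>i<n. A i" "\<Union> (range A)"] by (meson UN_mono order_trans subset_UNIV subset_refl)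
    qed
    have le2: "\<nu> (\<Union> (range A)) \<le> (\<Sum>i. \<nu> (A i))"
      unfolding \<nu>_def[of "\<Union> (range A)"]
    proof (rule SUP_least)
      fix F assume F: "F \<in> {F \<in> Fn. F \<subseteq> \<Union> (range A)}"
      define X where "X i = F \<inter> A i" for i
      have XF: "range X \<subseteq> Fn" using F A(1) F_int unfolding X_def by auto
      have Xd: "disjoint_family X" using A(2) unfolding X_def disjoint_family_on_def by auto
      have XU: "(\<Union>i. X i) = F" using F unfolding X_def by auto
      have "(\<lambda>i. L (X i)) sums L F" using cadd[OF XF Xd] F XU by simp
      then have "ennreal (L F) \<le> (\<Sum>i. ennreal (L (X i)))" by (rule ennreal_sums_le)
      also have "\<dots> \<le> (\<Sum>i. \<nu> (A i))"
        using XF unfolding X_def by (intro suminf_le upper) auto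
      finally show "ennreal (L F) \<le> (\<Sum>i. \<nu> (A i))" .
    qed
    show "(\<Sum>i. \<nu> (A i)) = \<nu> (\<Union> (range A))" using le1 le2 by (rule antisym)
  qed
qed

lemma sup_char:
  fixes L :: "'b set \<Rightarrow> real" and Fn :: "'b set set"
  assumes bound: "\<And>F. F \<in> Fn \<Longrightarrow> F \<subseteq> E \<Longrightarrow> L F \<le> B" and F_empty: "{} \<in> Fn" and L0: "L {} = 0"
  shows "(SUP F \<in> {F \<in> Fn. F \<subseteq> E}. ennreal (L F)) < \<infinity>"
    "\<And>F. F \<in> Fn \<Longrightarrow> F \<subseteq> E \<Longrightarrow> L F \<le> enn2real (SUP F \<in> {F \<in> Fn. F \<subseteq> E}. ennreal (L F))"
    "\<And>c. c \<ge> 0 \<Longrightarrow> (\<And>F. F \<in> Fn \<Longrightarrow> F \<subseteq> E \<Longrightarrow> L F \<le> c) \<Longrightarrow> enn2real (SUP F \<in> {F \<in> Fn. F \<subseteq> E}. ennreal (L F)) \<le> c"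
proof -
  define \<nu> where "\<nu> = (SUP F \<in> {F \<in> Fn. F \<subseteq> E}. ennreal (L F))"
  have B0: "B \<ge> 0" using bound[OF F_empty] L0 by simp
  have "\<nu> \<le> ennreal B" unfolding \<nu>_def using bound by (intro SUP_least ennreal_leI) auto
  then show fin: "(SUP F \<in> {F \<in> Fn. F \<subseteq> E}. ennreal (L F)) < \<infinity>"
    unfolding \<nu>_def[symmetric] using le_less_trans[OF _ ennreal_less_top[of B]] by simp
  show "L F \<le> enn2real (SUP F \<in> {F \<in> Fn. F \<subseteq> E}. ennreal (L F))" if F: "F \<in> Fn" "F \<subseteq> E" for F
  proof (cases "L F \<ge> 0")
    case True
    have "ennreal (L F) \<le> \<nu>" unfolding \<nu>_def using F by (intro SUP_upper) auto
    then have "enn2real (ennreal (L F)) \<le> enn2real \<nu>" using fin unfolding \<nu>_def[symmetric] by (intro enn2real_mono) auto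
    then show ?thesis using True unfolding \<nu>_def by simp
  next
    case False
    then show ?thesis using enn2real_nonneg[of \<nu>] unfolding \<nu>_def by linarith
  qed
  show "enn2real (SUP F \<in> {F \<in> Fn. F \<subseteq> E}. ennreal (L F)) \<le> c"
    if c: "c \<ge> 0" "\<And>F. F \<in> Fn \<Longrightarrow> F \<subseteq> E \<Longrightarrow> L F \<le> c" for c
  proof -
    have "\<nu> \<le> ennreal c" unfolding \<nu>_def using c by (intro SUP_least ennreal_leI) auto
    then show ?thesis using c(1) unfolding \<nu>_def by (intro enn2real_leI) auto
  qed
qed

lemma dens_real:
  fixes f :: "'b \<Rightarrow> ennreal"
  assumes f[measurable]: "f \<in> borel_measurable N" and fin: "(\<integral>\<^sup>+ x. f x \<partial>N) < \<infinity>"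
  shows "integrable N (\<lambda>x. enn2real (f x))"
    "\<And>E. E \<in> sets N \<Longrightarrow> (LINT x:E|N. enn2real (f x)) = enn2real (\<integral>\<^sup>+ x. f x * indicator E x \<partial>N)"
proof -
  have AEf: "AE x in N. f x < \<infinity>" using f fin by (rule finite_nn_integral_imp_ae_finite)
  have "(\<integral>\<^sup>+ x. ennreal (enn2real (f x)) \<partial>N) = (\<integral>\<^sup>+ x. f x \<partial>N)"
    using AEf by (intro nn_integral_cong_AE) (auto simp: less_top)
  also have "\<dots> = ennreal (enn2real (\<integral>\<^sup>+ x. f x \<partial>N))" using fin by simp
  finally show "integrable N (\<lambda>x. enn2real (f x))"
    by (subst (asm) nn_integral_eq_integrable) auto
  fix E assume E[measurable]: "E \<in> sets N"
  have le: "(\<integral>\<^sup>+ x. f x * indicator E x \<partial>N) \<le> (\<integral>\<^sup>+ x. f x \<partial>N)"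
    by (intro nn_integral_mono) (auto split: split_indicator)
  have fin2: "(\<integral>\<^sup>+ x. f x * indicator E x \<partial>N) < \<infinity>" using le fin by (rule le_less_trans)
  have "(\<integral>\<^sup>+ x. ennreal (indicator E x * enn2real (f x)) \<partial>N) = (\<integral>\<^sup>+ x. f x * indicator E x \<partial>N)"
    using AEf by (intro nn_integral_cong_AE) (auto simp: less_top split: split_indicator)
  also have "\<dots> = ennreal (enn2real (\<integral>\<^sup>+ x. f x * indicator E x \<partial>N))" using fin2 by simp
  finally have "integrable N (\<lambda>x. indicator E x * enn2real (f x)) \<and>
      integral\<^sup>L N (\<lambda>x. indicator E x * enn2real (f x)) = enn2real (\<integral>\<^sup>+ x. f x * indicator E x \<partial>N)"
    by (subst (asm) nn_integral_eq_integrable) auto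
  then show "(LINT x:E|N. enn2real (f x)) = enn2real (\<integral>\<^sup>+ x. f x * indicator E x \<partial>N)"
    unfolding set_lebesgue_integral_def by simp
qed

locale cs = pair_sigma_finite M M for M :: "'a measure" +
  fixes W :: "nat \<Rightarrow> 'a \<times> 'a \<Rightarrow> real" and C :: real
  assumes intW: "\<And>n. integrable (M \<Otimes>\<^sub>M M) (W n)"
  and symW: "\<And>n. AE z in M \<Otimes>\<^sub>M M. W n (snd z, fst z) = W n z"
  and L1: "\<And>n. (LINT z|(M \<Otimes>\<^sub>M M). \<bar>W n z\<bar>) \<le> C"
  and UI2: "\<And>e. e > 0 \<Longrightarrow> \<exists>B0. \<forall>B\<ge>B0. \<forall>n.
        (LINT z:{z \<in> space (M \<Otimes>\<^sub>M M). \<bar>W n z\<bar> > B}|(M \<Otimes>\<^sub>M M). \<bar>W n z\<bar>) \<le> e"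
  and cauchy: "\<And>e. e > 0 \<Longrightarrow> \<exists>N. \<forall>m\<ge>N. \<forall>n\<ge>N. cut_norm M (\<lambda>z. W m z - W n z) < e"
begin

abbreviation "N \<equiv> M \<Otimes>\<^sub>M M"

definition I :: "nat \<Rightarrow> ('a \<times> 'a) set \<Rightarrow> real" where
  "I n E = (LINT z:E|N. W n z)"

lemma measW[measurable]: "W n \<in> borel_measurable N"
  using intW by auto

lemma sintW: "set_integrable N E (W n)" if "E \<in> sets N"
  unfolding set_integrable_def using that intW by (intro integrable_mult_indicator) auto

lemma I_Un: "E \<in> sets N \<Longrightarrow> F \<in> sets N \<Longrightarrow> E \<inter> F = {} \<Longrightarrow> I n (E \<union> F) = I n E + I n F"
  unfolding I_def by (intro set_integral_Un sintW)

lemma I_Diff: "E \<in> sets N \<Longrightarrow> F \<in> sets N \<Longrightarrow> F \<subseteq> E \<Longrightarrow> I n (E - F) = I n E - I n F"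
proof -
  assume a: "E \<in> sets N" "F \<in> sets N" "F \<subseteq> E"
  have "I n ((E - F) \<union> F) = I n (E - F) + I n F" using a by (intro I_Un) auto
  moreover have "(E - F) \<union> F = E" using a by auto
  ultimately show ?thesis by simp
qed

lemma I_empty[simp]: "I n {} = 0" unfolding I_def set_lebesgue_integral_def by simp

lemma I_abs: "E \<in> sets N \<Longrightarrow> \<bar>I n E\<bar> \<le> C"
  unfolding I_def using set_int_abs_le[OF intW[of n], of E] L1[of n] by linarith

lemma I_abs2: "\<bar>I n E\<bar> \<le> (LINT z:E|N. \<bar>W n z\<bar>)"
  unfolding I_def by (rule set_int_abs_le2)

lemma I_rect_diff:
  assumes "T \<in> sets M" "U \<in> sets M"
  shows "\<bar>I m (T \<times> U) - I n (T \<times> U)\<bar> \<le> cut_norm M (\<lambda>z. W m z - W n z)"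
proof -
  have "I m (T \<times> U) - I n (T \<times> U) = (LINT z:T \<times> U|N. W m z - W n z)"
    unfolding I_def using assms by (intro set_integral_diff(2)[symmetric] sintW) auto
  also have "\<bar>\<dots>\<bar> \<le> cut_norm M (\<lambda>z. W m z - W n z)"
    using assms intW by (intro cut_rect) auto
  finally show ?thesis .
qed

lemma rect_conv:
  assumes "T \<in> sets M" "U \<in> sets M"
  shows "convergent (\<lambda>n. I n (T \<times> U))"
proof -
  have "Cauchy (\<lambda>n. I n (T \<times> U))"
  proof (rule CauchyI)
    fix e :: real assume "0 < e"
    from cauchy[OF this] obtain N0 where N0: "\<forall>m\<ge>N0. \<forall>n\<ge>N0. cut_norm M (\<lambda>z. W m z - W n z) < e" by blast
    show "\<exists>M. \<forall>m\<ge>M. \<forall>n\<ge>M. norm (I m (T \<times> U) - I n (T \<times> U)) < e"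
    proof (intro exI[of _ N0] allI impI)
      fix m n assume mn: "m \<ge> N0" "n \<ge> N0"
      then have "cut_norm M (\<lambda>z. W m z - W n z) < e" using N0 by blast
      then show "norm (I m (T \<times> U) - I n (T \<times> U)) < e"
        using I_rect_diff[OF assms, of m n] by simp
    qed
  qed
  then show ?thesis by (simp add: Cauchy_convergent_iff)
qed

lemma UAC:
  assumes "e > 0"
  shows "\<exists>d>0. \<forall>E\<in>sets N. emeasure N E < \<infinity> \<longrightarrow> measure N E < d \<longrightarrow> (\<forall>n. (LINT z:E|N. \<bar>W n z\<bar>) \<le> e)"
proof -
  from UI2[of "e/2"] assms obtain B0 where B0: "\<forall>B\<ge>B0. \<forall>n.
        (LINT z:{z \<in> space N. \<bar>W n z\<bar> > B}|N. \<bar>W n z\<bar>) \<le> e/2" by auto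
  define B where "B = max B0 1"
  have Bpos: "B > 0" and BB0: "B \<ge> B0" unfolding B_def by auto
  define d where "d = e / (2 * B)"
  have dpos: "d > 0" unfolding d_def using Bpos assms by auto
  show ?thesis
  proof (intro exI[of _ d] conjI dpos ballI impI allI)
    fix E n assume E: "E \<in> sets N" "emeasure N E < \<infinity>" "measure N E < d"
    let ?G = "{z \<in> space N. \<bar>W n z\<bar> > B}"
    have Gm: "?G \<in> sets N" by measurable
    have iE: "integrable N (indicator E :: _ \<Rightarrow> real)"
      using E by (simp add: integrable_indicator_iff sets.Int_space_eq2)
    have "(LINT z:E|N. \<bar>W n z\<bar>) \<le> (LINT z|N. indicator ?G z *\<^sub>R \<bar>W n z\<bar> + B * indicator E z)"
      unfolding set_lebesgue_integral_def
    proof (rule integral_mono)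
      show "integrable N (\<lambda>x. indicat_real E x *\<^sub>R \<bar>W n x\<bar>)"
        using E intW by (intro integrable_mult_indicator integrable_abs) auto
      show "integrable N (\<lambda>z. indicat_real ?G z *\<^sub>R \<bar>W n z\<bar> + B * indicat_real E z)"
        by (intro Bochner_Integration.integrable_add integrable_mult_indicator integrable_abs integrable_mult_right; simp add: Gm intW iE)
      fix z assume "z \<in> space N"
      then show "indicat_real E z *\<^sub>R \<bar>W n z\<bar> \<le> indicat_real ?G z *\<^sub>R \<bar>W n z\<bar> + B * indicat_real E z"
        using Bpos by (auto split: split_indicator)
    qed
    also have "\<dots> = (LINT z:?G|N. \<bar>W n z\<bar>) + B * measure N E"
      unfolding set_lebesgue_integral_def
      using Gm intW iE E
      using integrable_mult_indicator[OF Gm integrable_abs[OF intW[of n]]]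
      by (subst Bochner_Integration.integral_add) auto
    also have "\<dots> \<le> e/2 + B * d"
      using B0 BB0 E(3) Bpos by (intro add_mono) auto
    also have "\<dots> = e" unfolding d_def using Bpos by simp
    finally show "(LINT z:E|N. \<bar>W n z\<bar>) \<le> e" .
  qed
qed

definition Aseq :: "nat \<Rightarrow> 'a set" where
  "Aseq = (SOME A. range A \<subseteq> sets M \<and> (\<Union>i. A i) = space M \<and> (\<forall>i. emeasure M (A i) \<noteq> \<infinity>) \<and> incseq A)"

lemma Aseq: "range Aseq \<subseteq> sets M" "(\<Union>i. Aseq i) = space M" "\<And>i. emeasure M (Aseq i) \<noteq> \<infinity>" "incseq Aseq"
proof -
  obtain A :: "nat \<Rightarrow> 'a set" where "range A \<subseteq> sets M" "(\<Union>i. A i) = space M" "\<And>i. emeasure M (A i) \<noteq> \<infinity>" "incseq A"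
    using M1.sigma_finite_incseq by blast
  then have ex: "\<exists>A. range A \<subseteq> sets M \<and> (\<Union>i. A i) = space M \<and> (\<forall>i. emeasure M (A i) \<noteq> \<infinity>) \<and> incseq A"
    by blast
  from someI_ex[OF ex] show "range Aseq \<subseteq> sets M" "(\<Union>i. Aseq i) = space M" "\<And>i. emeasure M (Aseq i) \<noteq> \<infinity>" "incseq Aseq"
    unfolding Aseq_def by auto
qed

lemma Aseq_sets[measurable]: "Aseq k \<in> sets M"
  using Aseq(1) by auto

definition Q :: "nat \<Rightarrow> ('a \<times> 'a) set" where "Q k = Aseq k \<times> Aseq k"

lemma Q_sets[measurable]: "Q k \<in> sets N"
  unfolding Q_def by simp

lemma Q_fin: "emeasure N (Q k) < \<infinity>"
proof -
  have "emeasure N (Q k) = emeasure M (Aseq k) * emeasure M (Aseq k)"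
    unfolding Q_def by (rule M1.emeasure_pair_measure_Times) simp_all
  then show ?thesis using Aseq(3)[of k] by (simp add: ennreal_mult_less_top top.not_eq_extremum)
qed

lemma Q_inc: "incseq Q"
  using Aseq(4) unfolding Q_def incseq_def by auto

lemma Q_space: "(\<Union>k. Q k) = space N"
proof
  show "(\<Union>k. Q k) \<subseteq> space N" using Q_sets sets.sets_into_space by blast
  show "space N \<subseteq> (\<Union>k. Q k)"
  proof
    fix z assume "z \<in> space N"
    then obtain x y where z: "z = (x, y)" "x \<in> space M" "y \<in> space M" by (auto simp: space_pair_measure)
    then obtain i j where "x \<in> Aseq i" "y \<in> Aseq j" using Aseq(2) by blast
    then have "x \<in> Aseq (max i j)" "y \<in> Aseq (max i j)"
      using Aseq(4) unfolding incseq_def by (auto intro: max.cobounded1 max.cobounded2)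
    then show "z \<in> (\<Union>k. Q k)" using z unfolding Q_def by auto
  qed
qed

lemma tail_small:
  assumes X: "range X \<subseteq> sets N" "decseq X" "(\<Inter>i. X i) = {}" "emeasure N (X 0) < \<infinity>" and e: "e > 0"
  shows "\<exists>J. \<forall>j\<ge>J. \<forall>n. \<bar>I n (X j)\<bar> \<le> e"
proof -
  from UAC[OF e] obtain d where d: "d > 0" "\<forall>E\<in>sets N. emeasure N E < \<infinity> \<longrightarrow> measure N E < d \<longrightarrow> (\<forall>n. (LINT z:E|N. \<bar>W n z\<bar>) \<le> e)"
    by blast
  have fin: "emeasure N (X i) < \<infinity>" for i
  proof -
    have "emeasure N (X i) \<le> emeasure N (X 0)"
      using X(1,2) by (intro emeasure_mono) (auto simp: decseq_def)
    then show ?thesis using X(4) by (meson order_le_less_trans)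
  qed
  have "(\<lambda>i. emeasure N (X i)) \<longlonglongrightarrow> emeasure N (\<Inter>i. X i)"
    using X fin by (intro Lim_emeasure_decseq) (auto simp: less_top)
  then have "(\<lambda>i. emeasure N (X i)) \<longlonglongrightarrow> 0" using X(3) by simp
  moreover have "(0::ennreal) < ennreal d" using d by simp
  ultimately have "eventually (\<lambda>i. emeasure N (X i) < ennreal d) sequentially"
    by (rule order_tendstoD(2))
  then obtain J where J: "\<And>j. j \<ge> J \<Longrightarrow> emeasure N (X j) < ennreal d"
    unfolding eventually_sequentially by blast
  show ?thesis
  proof (intro exI[of _ J] allI impI)
    fix j n assume "j \<ge> J"
    then have "emeasure N (X j) < ennreal d" by (rule J)
    moreover have "emeasure N (X j) = ennreal (measure N (X j))"
      using fin[of j] by (simp add: emeasure_eq_ennreal_measure less_top)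
    ultimately have "measure N (X j) < d"
      by (simp add: ennreal_less_iff)
    then have "(LINT z:X j|N. \<bar>W n z\<bar>) \<le> e"
      using d(2) fin[of j] X(1) by auto
    then show "\<bar>I n (X j)\<bar> \<le> e" using I_abs2[of n "X j"] by linarith
  qed
qed

lemma I_finite_Union:
  assumes "\<And>i. X i \<in> sets N" "disjoint_family X"
  shows "I n (\<Union>i<(J::nat). X i) = (\<Sum>i<J. I n (X i))"
  unfolding I_def using assms
  by (intro set_integral_finite_Union sintW) (auto simp: disjoint_family_on_def)

lemma I_split:
  fixes X :: "nat \<Rightarrow> ('a \<times> 'a) set"
  assumes X: "\<And>i. X i \<in> sets N" "disjoint_family X"
  shows "I n (\<Union>i. X i) = (\<Sum>i<J. I n (X i)) + I n (\<Union>i. X (i + J))"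
proof -
  have eq: "(\<Union>i. X i) = (\<Union>i<J. X i) \<union> (\<Union>i. X (i + J))"
  proof (rule set_eqI)
    fix z show "z \<in> (\<Union>i. X i) \<longleftrightarrow> z \<in> (\<Union>i<J. X i) \<union> (\<Union>i. X (i + J))"
    proof
      assume "z \<in> (\<Union>i. X i)"
      then obtain i where zi: "z \<in> X i" by blast
      show "z \<in> (\<Union>i<J. X i) \<union> (\<Union>i. X (i + J))"
      proof (cases "i < J")
        case True then show ?thesis using zi by blast
      next
        case False then have "z \<in> X ((i - J) + J)" using zi by simp
        then show ?thesis by blast
      qed
    qed auto
  qed
  have disj: "(\<Union>i<J. X i) \<inter> (\<Union>i. X (i + J)) = {}"
  proof (rule equals0I)
    fix z assume "z \<in> (\<Union>i<J. X i) \<inter> (\<Union>i. X (i + J))"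
    then obtain i i' where ii: "i < J" "z \<in> X i" "z \<in> X (i' + J)" by blast
    moreover have "i \<noteq> i' + J" using ii(1) by simp
    ultimately show False using X(2) unfolding disjoint_family_on_def by blast
  qed
  have "I n (\<Union>i. X i) = I n (\<Union>i<J. X i) + I n (\<Union>i. X (i + J))"
    unfolding eq using X disj by (intro I_Un) auto
  then show ?thesis using I_finite_Union[OF X] by simp
qed

lemma conv_Q: "E \<in> sets N \<Longrightarrow> convergent (\<lambda>n. I n (E \<inter> Q k))"
proof -
  assume "E \<in> sets N"
  then have E: "E \<in> sigma_sets (space M \<times> space M) {a \<times> b | a b. a \<in> sets M \<and> b \<in> sets M}"
    using sets_pair_measure by blast
  from Int_stable_pair_measure_generator[of M M] pair_measure_closed[of M M] E
  show ?thesis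
  proof (induct rule: sigma_sets_induct_disjoint)
    case (basic A)
    then obtain a b where ab: "A = a \<times> b" "a \<in> sets M" "b \<in> sets M" by blast
    then have "A \<inter> Q k = (a \<inter> Aseq k) \<times> (b \<inter> Aseq k)" unfolding Q_def by auto
    then show ?case using ab by (simp add: rect_conv)
  next
    case empty
    then show ?case by (simp add: convergent_const)
  next
    case (compl A)
    then have A: "A \<in> sets N" using sets_pair_measure by blast
    have "(space M \<times> space M - A) \<inter> Q k = Q k - A \<inter> Q k"
      using sets.sets_into_space[OF Q_sets[of k]] by (auto simp: space_pair_measure)
    moreover have "I n (Q k - A \<inter> Q k) = I n (Q k) - I n (A \<inter> Q k)" for n
      using A by (intro I_Diff) auto
    moreover have "convergent (\<lambda>n. I n (Q k))" unfolding Q_def by (simp add: rect_conv)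
    ultimately show ?case using compl(2) by (simp add: convergent_diff)
  next
    case (union A)
    define X where "X i = A i \<inter> Q k" for i
    have Xs: "X i \<in> sets N" for i
    proof -
      have "A i \<in> sets N" using union(2) unfolding sets_pair_measure[of M M, symmetric] by auto
      then show ?thesis unfolding X_def by (intro sets.Int Q_sets)
    qed
    have Xd: "disjoint_family X"
      using union(1) unfolding X_def disjoint_family_on_def by auto
    have eqU: "(\<Union>i. A i) \<inter> Q k = (\<Union>i. X i)" unfolding X_def by auto
    have "Cauchy (\<lambda>n. I n (\<Union>i. X i))"
    proof (rule CauchyI)
      fix e :: real assume e: "e > 0"
      have "\<exists>J. \<forall>j\<ge>J. \<forall>n. \<bar>I n (\<Union>i. X (i + j))\<bar> \<le> e/4"
      proof (rule tail_small)
        show "range (\<lambda>j. \<Union>i. X (i + j)) \<subseteq> sets N" using Xs by auto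
        show "decseq (\<lambda>j. \<Union>i. X (i + j))"
        proof (rule decseq_SucI)
          fix j show "(\<Union>i. X (i + Suc j)) \<subseteq> (\<Union>i. X (i + j))"
          proof
            fix z assume "z \<in> (\<Union>i. X (i + Suc j))"
            then obtain i where "z \<in> X (i + Suc j)" by blast
            then have "z \<in> X (Suc i + j)" by simp
            then show "z \<in> (\<Union>i. X (i + j))" by blast
          qed
        qed
        show "(\<Inter>j. \<Union>i. X (i + j)) = {}"
        proof (rule ccontr)
          assume "(\<Inter>j. \<Union>i. X (i + j)) \<noteq> {}"
          then obtain z where z: "\<And>j. z \<in> (\<Union>i. X (i + j))" by blast
          from z[of 0] obtain i where "z \<in> X i" by auto
          moreover from z[of "Suc i"] obtain i' where "z \<in> X (i' + Suc i)" by auto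
          moreover have "i \<noteq> i' + Suc i" by simp
          ultimately show False using Xd unfolding disjoint_family_on_def by blast
        qed
        have "(\<Union>i. X (i + 0)) \<subseteq> Q k" unfolding X_def by auto
        moreover have "(\<Union>i. X (i + 0)) \<in> sets N" using Xs by auto
        ultimately have "emeasure N (\<Union>i. X (i + 0)) \<le> emeasure N (Q k)"
          by (intro emeasure_mono) auto
        then show "emeasure N (\<Union>i. X (i + 0)) < \<infinity>"
          using Q_fin[of k] by (rule order_le_less_trans)
        show "e/4 > 0" using e by simp
      qed
      then obtain J where J: "\<And>n. \<bar>I n (\<Union>i. X (i + J))\<bar> \<le> e/4" by blast
      have "convergent (\<lambda>n. \<Sum>i<J. I n (X i))"
        using union(3) unfolding X_def by (intro convergent_sum) auto
      then have "Cauchy (\<lambda>n. \<Sum>i<J. I n (X i))" by (rule convergent_Cauchy)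
      then obtain N0 where N0: "\<And>m n. m \<ge> N0 \<Longrightarrow> n \<ge> N0 \<Longrightarrow> norm ((\<Sum>i<J. I m (X i)) - (\<Sum>i<J. I n (X i))) < e/2"
        using e unfolding Cauchy_iff by (meson half_gt_zero)
      show "\<exists>M. \<forall>m\<ge>M. \<forall>n\<ge>M. norm (I m (\<Union>i. X i) - I n (\<Union>i. X i)) < e"
      proof (intro exI[of _ N0] allI impI)
        fix m n assume "m \<ge> N0" "n \<ge> N0"
        then have a: "\<bar>(\<Sum>i<J. I m (X i)) - (\<Sum>i<J. I n (X i))\<bar> < e/2" using N0 by force
        show "norm (I m (\<Union>i. X i) - I n (\<Union>i. X i)) < e"
          unfolding real_norm_def
          using a J[of m] J[of n] I_split[OF Xs Xd, of m J] I_split[OF Xs Xd, of n J]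
          by linarith
      qed
    qed
    then show ?case unfolding eqU by (simp add: Cauchy_convergent_iff)
  qed
qed

lemma tail_dec: "decseq (\<lambda>j. \<Union>i. X (i + j :: nat))"
proof (rule decseq_SucI)
  fix j show "(\<Union>i. X (i + Suc j)) \<subseteq> (\<Union>i. X (i + j))"
  proof
    fix z assume "z \<in> (\<Union>i. X (i + Suc j))"
    then obtain i where "z \<in> X (i + Suc j)" by blast
    then have "z \<in> X (Suc i + j)" by simp
    then show "z \<in> (\<Union>i. X (i + j))" by blast
  qed
qed

lemma tail_empty: "disjoint_family X \<Longrightarrow> (\<Inter>j. \<Union>i. X (i + j :: nat)) = {}"
proof (rule ccontr)
  assume Xd: "disjoint_family X" and "(\<Inter>j. \<Union>i. X (i + j)) \<noteq> {}"
  then obtain z where z: "\<And>j. z \<in> (\<Union>i. X (i + j))" by blast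
  from z[of 0] obtain i where "z \<in> X i" by auto
  moreover from z[of "Suc i"] obtain i' where "z \<in> X (i' + Suc i)" by auto
  moreover have "i \<noteq> i' + Suc i" by simp
  ultimately show False using Xd unfolding disjoint_family_on_def by blast
qed

definition Fin :: "('a \<times> 'a) set set" where "Fin = {E \<in> sets N. \<exists>k. E \<subseteq> Q k}"

definition lam :: "('a \<times> 'a) set \<Rightarrow> real" where "lam E = lim (\<lambda>n. I n E)"

lemma Fin_sets: "E \<in> Fin \<Longrightarrow> E \<in> sets N" unfolding Fin_def by auto

lemma Fin_Int: "F \<in> Fin \<Longrightarrow> E \<in> sets N \<Longrightarrow> F \<inter> E \<in> Fin"
  unfolding Fin_def by auto

lemma Fin_Diff: "F \<in> Fin \<Longrightarrow> E \<in> sets N \<Longrightarrow> F - E \<in> Fin"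
  unfolding Fin_def by auto

lemma Fin_empty: "{} \<in> Fin" unfolding Fin_def by auto

lemma Fin_Un: "F \<in> Fin \<Longrightarrow> G \<in> Fin \<Longrightarrow> F \<union> G \<in> Fin"
proof -
  assume "F \<in> Fin" "G \<in> Fin"
  then obtain k l where "F \<in> sets N" "G \<in> sets N" "F \<subseteq> Q k" "G \<subseteq> Q l" unfolding Fin_def by auto
  moreover have "Q k \<subseteq> Q (max k l)" "Q l \<subseteq> Q (max k l)" using Q_inc unfolding incseq_def by auto
  ultimately show "F \<union> G \<in> Fin" unfolding Fin_def by blast
qed

lemma Fin_conv: "E \<in> Fin \<Longrightarrow> (\<lambda>n. I n E) \<longlonglongrightarrow> lam E"
proof -
  assume "E \<in> Fin"
  then obtain k where E: "E \<in> sets N" "E \<subseteq> Q k" unfolding Fin_def by auto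
  then have "E \<inter> Q k = E" by auto
  then have "convergent (\<lambda>n. I n E)" using conv_Q[OF E(1), of k] by simp
  then show ?thesis unfolding lam_def by (simp add: convergent_LIMSEQ_iff)
qed

lemma lam_Un: "F \<in> Fin \<Longrightarrow> G \<in> Fin \<Longrightarrow> F \<inter> G = {} \<Longrightarrow> lam (F \<union> G) = lam F + lam G"
proof -
  assume a: "F \<in> Fin" "G \<in> Fin" "F \<inter> G = {}"
  have "(\<lambda>n. I n (F \<union> G)) \<longlonglongrightarrow> lam (F \<union> G)" using a by (intro Fin_conv Fin_Un)
  moreover have "(\<lambda>n. I n (F \<union> G)) = (\<lambda>n. I n F + I n G)"
    using a by (intro ext I_Un Fin_sets)
  moreover have "(\<lambda>n. I n F + I n G) \<longlonglongrightarrow> lam F + lam G"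
    using a by (intro tendsto_add Fin_conv)
  ultimately show ?thesis using LIMSEQ_unique by (metis (no_types))
qed

lemma lam_abs: "E \<in> Fin \<Longrightarrow> \<bar>lam E\<bar> \<le> C"
proof -
  assume a: "E \<in> Fin"
  have "(\<lambda>n. \<bar>I n E\<bar>) \<longlonglongrightarrow> \<bar>lam E\<bar>" using a by (intro tendsto_rabs Fin_conv)
  moreover have "\<And>n. \<bar>I n E\<bar> \<le> C" using a by (intro I_abs Fin_sets)
  ultimately show ?thesis by (intro LIMSEQ_le_const2) auto
qed

lemma lam_null: "E \<in> Fin \<Longrightarrow> E \<in> null_sets N \<Longrightarrow> lam E = 0"
proof -
  assume a: "E \<in> Fin" "E \<in> null_sets N"
  have "I n E = 0" for n
  proof -
    have "AE z in N. indicator E z *\<^sub>R W n z = 0"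
      using AE_not_in[OF a(2)] by eventually_elim auto
    then show ?thesis unfolding I_def set_lebesgue_integral_def by (rule integral_eq_zero_AE)
  qed
  then have "(\<lambda>n. I n E) \<longlonglongrightarrow> 0" by simp
  then show ?thesis using Fin_conv[OF a(1)] LIMSEQ_unique by blast
qed

lemma lam_cadd:
  fixes X :: "nat \<Rightarrow> ('a \<times> 'a) set"
  assumes X: "range X \<subseteq> Fin" "disjoint_family X" "(\<Union>i. X i) \<in> Fin"
  shows "(\<lambda>i. lam (X i)) sums lam (\<Union>i. X i)"
proof -
  have Xs: "\<And>i. X i \<in> sets N" using X(1) Fin_sets by auto
  obtain k where Uk: "(\<Union>i. X i) \<subseteq> Q k" using X(3) unfolding Fin_def by auto
  have TFin: "(\<Union>i. X (i + j)) \<in> Fin" for j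
  proof -
    have "(\<Union>i. X (i + j)) \<in> sets N" using Xs by auto
    moreover have "(\<Union>i. X (i + j)) \<subseteq> Q k" using Uk by blast
    ultimately show ?thesis unfolding Fin_def by blast
  qed
  have split: "lam (\<Union>i. X i) = (\<Sum>i<J. lam (X i)) + lam (\<Union>i. X (i + J))" for J
  proof -
    have "(\<lambda>n. I n (\<Union>i. X i)) \<longlonglongrightarrow> lam (\<Union>i. X i)" using X(3) by (rule Fin_conv)
    moreover have "(\<lambda>n. I n (\<Union>i. X i)) = (\<lambda>n. (\<Sum>i<J. I n (X i)) + I n (\<Union>i. X (i + J)))"
      by (intro ext I_split[OF Xs X(2)])
    moreover have "(\<lambda>n. (\<Sum>i<J. I n (X i)) + I n (\<Union>i. X (i + J))) \<longlonglongrightarrow> (\<Sum>i<J. lam (X i)) + lam (\<Union>i. X (i + J))"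
      using X(1) by (intro tendsto_add tendsto_sum Fin_conv TFin) auto
    ultimately show ?thesis using LIMSEQ_unique by (metis (no_types))
  qed
  show ?thesis unfolding sums_def
  proof (rule LIMSEQ_I)
    fix r :: real assume r: "r > 0"
    have "\<exists>J. \<forall>j\<ge>J. \<forall>n. \<bar>I n (\<Union>i. X (i + j))\<bar> \<le> r/2"
    proof (rule tail_small)
      show "range (\<lambda>j. \<Union>i. X (i + j)) \<subseteq> sets N" using Xs by auto
      show "decseq (\<lambda>j. \<Union>i. X (i + j))" by (rule tail_dec)
      show "(\<Inter>j. \<Union>i. X (i + j)) = {}" using X(2) by (rule tail_empty)
      have "(\<Union>i. X (i + 0)) \<subseteq> Q k" using Uk by auto
      moreover have "(\<Union>i. X (i + 0)) \<in> sets N" using Xs by auto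
      ultimately have "emeasure N (\<Union>i. X (i + 0)) \<le> emeasure N (Q k)"
        by (intro emeasure_mono) auto
      then show "emeasure N (\<Union>i. X (i + 0)) < \<infinity>"
        using Q_fin[of k] by (rule order_le_less_trans)
      show "r/2 > 0" using r by simp
    qed
    then obtain J where J: "\<And>j n. j \<ge> J \<Longrightarrow> \<bar>I n (\<Union>i. X (i + j))\<bar> \<le> r/2" by blast
    show "\<exists>no. \<forall>n\<ge>no. norm ((\<Sum>i<n. lam (X i)) - lam (\<Union>i. X i)) < r"
    proof (intro exI[of _ J] allI impI)
      fix j assume j: "j \<ge> J"
      have "(\<lambda>n. \<bar>I n (\<Union>i. X (i + j))\<bar>) \<longlonglongrightarrow> \<bar>lam (\<Union>i. X (i + j))\<bar>"
        by (intro tendsto_rabs Fin_conv TFin)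
      then have "\<bar>lam (\<Union>i. X (i + j))\<bar> \<le> r/2"
        using J[OF j] by (intro LIMSEQ_le_const2) auto
      then show "norm ((\<Sum>i<j. lam (X i)) - lam (\<Union>i. X i)) < r"
        using split[of j] r by simp
    qed
  qed
qed

definition nup :: "('a \<times> 'a) set \<Rightarrow> ennreal" where
  "nup E = (SUP F \<in> {F \<in> Fin. F \<subseteq> E}. ennreal (lam F))"
definition num :: "('a \<times> 'a) set \<Rightarrow> ennreal" where
  "num E = (SUP F \<in> {F \<in> Fin. F \<subseteq> E}. ennreal (- lam F))"

lemma lam_empty: "lam {} = 0"
  using lam_Un[OF Fin_empty Fin_empty] by simp

lemma nup_meas: "positive (sets N) nup" "countably_additive (sets N) nup"
  unfolding nup_def
  by (rule jordan[OF _ Fin_Int Fin_Un Fin_empty lam_Un lam_cadd sets.sigma_algebra_axioms]; (auto simp: Fin_sets)?)+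

lemma num_meas: "positive (sets N) num" "countably_additive (sets N) num"
proof -
  have a: "- lam (F \<union> G) = - lam F + - lam G" if "F \<in> Fin" "G \<in> Fin" "F \<inter> G = {}" for F G
    using lam_Un[OF that] by simp
  have b: "(\<lambda>i. - lam (X i)) sums - lam (\<Union>i. X i)"
    if "range X \<subseteq> Fin" "disjoint_family X" "(\<Union>i. X i) \<in> Fin" for X :: "nat \<Rightarrow> ('a \<times> 'a) set"
    using lam_cadd[OF that] by (rule sums_minus)
  show "positive (sets N) num" "countably_additive (sets N) num"
    unfolding num_def
    by (rule jordan[where L="\<lambda>F. - lam F", OF _ Fin_Int Fin_Un Fin_empty a b sets.sigma_algebra_axioms]; (auto simp: Fin_sets)?)+
qed

lemma nu_null:
  assumes E: "E \<in> null_sets N"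
  shows "nup E = 0" "num E = 0"
proof -
  have "lam F = 0" if "F \<in> Fin" "F \<subseteq> E" for F
    using that E by (intro lam_null) (auto intro: null_sets_subset Fin_sets)
  then have "nup E = (SUP F \<in> {F \<in> Fin. F \<subseteq> E}. 0)" "num E = (SUP F \<in> {F \<in> Fin. F \<subseteq> E}. 0)"
    unfolding nup_def num_def by (auto intro!: SUP_cong)
  moreover have "{F \<in> Fin. F \<subseteq> E} \<noteq> {}" using Fin_empty by auto
  ultimately show "nup E = 0" "num E = 0" by simp_all
qed

lemma lam_split: "F \<in> Fin \<Longrightarrow> G \<in> Fin \<Longrightarrow> G \<subseteq> F \<Longrightarrow> lam F = lam G + lam (F - G)"
proof -
  assume a: "F \<in> Fin" "G \<in> Fin" "G \<subseteq> F"
  have "lam (G \<union> (F - G)) = lam G + lam (F - G)"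
    using a by (intro lam_Un Fin_Diff Fin_sets) auto
  moreover have "G \<union> (F - G) = F" using a by auto
  ultimately show ?thesis by simp
qed

lemma jordan_id:
  assumes F: "F \<in> Fin"
  shows "enn2real (nup F) - enn2real (num F) = lam F"
proof -
  define p where "p = enn2real (nup F)"
  define m where "m = enn2real (num F)"
  have bp: "\<And>G. G \<in> Fin \<Longrightarrow> G \<subseteq> F \<Longrightarrow> lam G \<le> C" using lam_abs by fastforce
  have bm: "\<And>G. G \<in> Fin \<Longrightarrow> G \<subseteq> F \<Longrightarrow> - lam G \<le> C" using lam_abs by fastforce
  have L0m: "- lam {} = 0" by (simp add: lam_empty)
  have p2: "lam G \<le> p" if "G \<in> Fin" "G \<subseteq> F" for G
    unfolding p_def nup_def using sup_char(2)[where Fn=Fin and E=F and L=lam and B=C] bp Fin_empty lam_empty that by blast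
  have p3: "p \<le> c" if "c \<ge> 0" "\<And>G. G \<in> Fin \<Longrightarrow> G \<subseteq> F \<Longrightarrow> lam G \<le> c" for c
    unfolding p_def nup_def using sup_char(3)[where Fn=Fin and E=F and L=lam and B=C] bp Fin_empty lam_empty that by blast
  have m2: "- lam G \<le> m" if "G \<in> Fin" "G \<subseteq> F" for G
    unfolding m_def num_def using sup_char(2)[where Fn=Fin and E=F and L="\<lambda>F. - lam F" and B=C] bm Fin_empty L0m that by blast
  have m3: "m \<le> c" if "c \<ge> 0" "\<And>G. G \<in> Fin \<Longrightarrow> G \<subseteq> F \<Longrightarrow> - lam G \<le> c" for c
    unfolding m_def num_def using sup_char(3)[where Fn=Fin and E=F and L="\<lambda>F. - lam F" and B=C] bm Fin_empty L0m that by blast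
  have FF: "F - G \<in> Fin" "F - G \<subseteq> F" if "G \<in> Fin" for G
    using F that by (auto intro: Fin_Diff Fin_sets)
  have "p \<le> lam F + m"
  proof (rule p3)
    show "0 \<le> lam F + m" using m2[OF F order_refl] by simp
    fix G assume G: "G \<in> Fin" "G \<subseteq> F"
    have "lam F = lam G + lam (F - G)" using lam_split[OF F G] .
    moreover have "- lam (F - G) \<le> m" using m2[OF FF[OF G(1)]] by simp
    ultimately show "lam G \<le> lam F + m" by simp
  qed
  moreover have "m \<le> p - lam F"
  proof (rule m3)
    show "0 \<le> p - lam F" using p2[OF F order_refl] by simp
    fix G assume G: "G \<in> Fin" "G \<subseteq> F"
    have "lam F = lam G + lam (F - G)" using lam_split[OF F G] .
    moreover have "lam (F - G) \<le> p" using p2[OF FF[OF G(1)]] by simp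
    ultimately show "- lam G \<le> p - lam F" by simp
  qed
  ultimately show ?thesis unfolding p_def m_def by simp
qed

lemma nu_fin: "nup (space N) < \<infinity>" "num (space N) < \<infinity>"
proof -
  have bp: "\<And>G. G \<in> Fin \<Longrightarrow> G \<subseteq> space N \<Longrightarrow> lam G \<le> C" using lam_abs by fastforce
  have bm: "\<And>G. G \<in> Fin \<Longrightarrow> G \<subseteq> space N \<Longrightarrow> - lam G \<le> C" using lam_abs by fastforce
  have L0m: "- lam {} = 0" by (simp add: lam_empty)
  show "nup (space N) < \<infinity>"
    unfolding nup_def using sup_char(1)[where Fn=Fin and E="space N" and L=lam and B=C] bp Fin_empty lam_empty by blast
  show "num (space N) < \<infinity>"
    unfolding num_def using sup_char(1)[where Fn=Fin and E="space N" and L="\<lambda>F. - lam F" and B=C] bm Fin_empty L0m by blast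
qed

lemma density_of:
  assumes pos: "positive (sets N) nu" and ca: "countably_additive (sets N) nu"
    and null: "\<And>E. E \<in> null_sets N \<Longrightarrow> nu E = 0" and fin: "nu (space N) < \<infinity>"
  shows "\<exists>f. integrable N f \<and> (\<forall>E\<in>sets N. (LINT z:E|N. f z) = enn2real (nu E))"
proof -
  define Mp where "Mp = measure_of (space N) (sets N) nu"
  have sMp: "sets Mp = sets N" unfolding Mp_def by simp
  have eMp: "emeasure Mp E = nu E" if "E \<in> sets N" for E
    unfolding Mp_def using sets.sigma_algebra_axioms pos ca that by (rule emeasure_measure_of_sigma)
  have ac: "absolutely_continuous N Mp"
    unfolding absolutely_continuous_def
  proof
    fix E assume E: "E \<in> null_sets N"
    then have "E \<in> sets N" by auto
    moreover have "emeasure Mp E = 0" using eMp[OF \<open>E \<in> sets N\<close>] null[OF E] by simp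
    ultimately show "E \<in> null_sets Mp" by (simp add: null_sets_def sMp)
  qed
  obtain f where f: "f \<in> borel_measurable N" "density N f = Mp"
    using P.Radon_Nikodym[OF ac sMp] by blast
  have fE: "(\<integral>\<^sup>+ x. f x * indicator E x \<partial>N) = nu E" if "E \<in> sets N" for E
    using emeasure_density[OF f(1) that] f(2) eMp[OF that] by simp
  have "(\<integral>\<^sup>+ x. f x \<partial>N) = (\<integral>\<^sup>+ x. f x * indicator (space N) x \<partial>N)"
    by (intro nn_integral_cong) auto
  also have "\<dots> = nu (space N)" by (rule fE) simp
  finally have ffin: "(\<integral>\<^sup>+ x. f x \<partial>N) < \<infinity>" using fin by simp
  show ?thesis
  proof (intro exI[of _ "\<lambda>x. enn2real (f x)"] conjI ballI)
    show "integrable N (\<lambda>x. enn2real (f x))" using dens_real(1)[OF f(1) ffin] .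
    fix E assume E: "E \<in> sets N"
    show "(LINT z:E|N. enn2real (f z)) = enn2real (nu E)"
      using dens_real(2)[OF f(1) ffin E] fE[OF E] by simp
  qed
qed

lemma exists_V: "\<exists>V. integrable N V \<and> (\<forall>F\<in>Fin. (LINT z:F|N. V z) = lam F)"
proof -
  have fp: "nup E \<le> nup (space N)" "num E \<le> num (space N)" if "E \<in> sets N" for E
    unfolding nup_def num_def using that sets.sets_into_space by (auto intro!: SUP_subset_mono)
  obtain gp where gp: "integrable N gp" "\<And>E. E \<in> sets N \<Longrightarrow> (LINT z:E|N. gp z) = enn2real (nup E)"
    using density_of[OF nup_meas nu_null(1) nu_fin(1)] by blast
  obtain gm where gm: "integrable N gm" "\<And>E. E \<in> sets N \<Longrightarrow> (LINT z:E|N. gm z) = enn2real (num E)"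
    using density_of[OF num_meas nu_null(2) nu_fin(2)] by blast
  show ?thesis
  proof (intro exI[of _ "\<lambda>z. gp z - gm z"] conjI ballI)
    show "integrable N (\<lambda>z. gp z - gm z)" using gp(1) gm(1) by (rule Bochner_Integration.integrable_diff)
    fix F assume F: "F \<in> Fin"
    then have Fs: "F \<in> sets N" by (rule Fin_sets)
    have "(LINT z:F|N. gp z - gm z) = (LINT z:F|N. gp z) - (LINT z:F|N. gm z)"
      using integrable_mult_indicator[OF Fs gp(1)] integrable_mult_indicator[OF Fs gm(1)]
      unfolding set_integrable_def[symmetric] by (rule set_integral_diff(2))
    also have "\<dots> = lam F" using gp(2)[OF Fs] gm(2)[OF Fs] jordan_id[OF F] by simp
    finally show "(LINT z:F|N. gp z - gm z) = lam F" .
  qed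
qed

definition Lr :: "'a set \<Rightarrow> 'a set \<Rightarrow> real" where "Lr T U = lim (\<lambda>n. I n (T \<times> U))"

lemma Lr_conv: "T \<in> sets M \<Longrightarrow> U \<in> sets M \<Longrightarrow> (\<lambda>n. I n (T \<times> U)) \<longlonglongrightarrow> Lr T U"
  unfolding Lr_def using rect_conv by (simp add: convergent_LIMSEQ_iff)

lemma rect_V:
  fixes V :: "'a \<times> 'a \<Rightarrow> real"
  assumes V: "integrable N V" "\<And>F. F \<in> Fin \<Longrightarrow> (LINT z:F|N. V z) = lam F"
    and TU: "T \<in> sets M" "U \<in> sets M"
  shows "(LINT z:T \<times> U|N. V z) = Lr T U"
proof -
  define R where "R = T \<times> U"
  have Rs: "R \<in> sets N" unfolding R_def using TU by simp
  define RQ where "RQ k = (T \<inter> Aseq k) \<times> (U \<inter> Aseq k)" for k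
  have RQeq: "RQ k = R \<inter> Q k" for k unfolding RQ_def R_def Q_def by auto
  have RQs: "RQ k \<in> sets N" for k unfolding RQ_def using TU by simp
  have RQF: "RQ k \<in> Fin" for k unfolding Fin_def using RQs RQeq by auto
  have RQinc: "incseq RQ" using Q_inc unfolding RQeq incseq_def by auto
  have RQU: "(\<Union>k. RQ k) = R"
    unfolding RQeq using Q_space sets.sets_into_space[OF Rs] by auto
  have siR: "integrable N (\<lambda>x. indicator R x * V x)" using integrable_mult_indicator[OF Rs V(1)] by simp
  have c1: "(\<lambda>k. LINT z:RQ k|N. V z) \<longlonglongrightarrow> (LINT z:R|N. V z)"
    using set_integral_cont_up[OF RQs RQinc, of V] siR
    unfolding RQU set_integrable_def by simp
  then have c1': "(\<lambda>k. lam (RQ k)) \<longlonglongrightarrow> (LINT z:R|N. V z)" using V(2)[OF RQF] by simp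
  have c2: "(\<lambda>k. lam (RQ k)) \<longlonglongrightarrow> Lr T U"
  proof (rule LIMSEQ_I)
    fix e :: real assume e: "e > 0"
    from cauchy[of "e/4"] e obtain N0 where N0: "\<forall>m\<ge>N0. \<forall>n\<ge>N0. cut_norm M (\<lambda>z. W m z - W n z) < e/4" by auto
    have lim0: "(\<lambda>k. I N0 (RQ k)) \<longlonglongrightarrow> I N0 R"
      unfolding I_def using set_integral_cont_up[OF RQs RQinc, of "W N0"] RQU sintW[OF Rs] by simp
    have "(\<lambda>k. I N0 R - I N0 (RQ k)) \<longlonglongrightarrow> 0"
      using tendsto_diff[OF tendsto_const[of "I N0 R"] lim0] by simp
    from LIMSEQ_D[OF this, of "e/4"] e obtain K where "\<forall>k\<ge>K. norm (I N0 R - I N0 (RQ k) - 0) < e/4"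
      by auto
    then have K: "\<And>k. k \<ge> K \<Longrightarrow> \<bar>I N0 R - I N0 (RQ k)\<bar> < e/4" by simp
    show "\<exists>no. \<forall>k\<ge>no. norm (lam (RQ k) - Lr T U) < e"
    proof (intro exI[of _ K] allI impI)
      fix k assume k: "k \<ge> K"
      have "(\<lambda>n. \<bar>I n (RQ k) - I n R\<bar>) \<longlonglongrightarrow> \<bar>lam (RQ k) - Lr T U\<bar>"
        unfolding R_def by (intro tendsto_rabs tendsto_diff Fin_conv RQF Lr_conv TU)
      moreover have "\<exists>N. \<forall>n\<ge>N. \<bar>I n (RQ k) - I n R\<bar> \<le> 3 * e / 4"
      proof (intro exI[of _ N0] allI impI)
        fix n assume n: "n \<ge> N0"
        have a: "\<bar>I n R - I N0 R\<bar> \<le> cut_norm M (\<lambda>z. W n z - W N0 z)"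
          unfolding R_def using TU by (rule I_rect_diff)
        have b: "\<bar>I n (RQ k) - I N0 (RQ k)\<bar> \<le> cut_norm M (\<lambda>z. W n z - W N0 z)"
          unfolding RQ_def using TU by (intro I_rect_diff) auto
        have c: "cut_norm M (\<lambda>z. W n z - W N0 z) < e/4" using N0 n by auto
        show "\<bar>I n (RQ k) - I n R\<bar> \<le> 3 * e / 4" using a b c K[OF k] by linarith
      qed
      ultimately have "\<bar>lam (RQ k) - Lr T U\<bar> \<le> 3 * e / 4" by (rule LIMSEQ_le_const2)
      then show "norm (lam (RQ k) - Lr T U) < e" using e by simp
    qed
  qed
  show ?thesis using LIMSEQ_unique[OF c1' c2] unfolding R_def .
qed

lemma I_swap: "T \<in> sets M \<Longrightarrow> U \<in> sets M \<Longrightarrow> I n (U \<times> T) = I n (T \<times> U)"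
proof -
  assume TU: "T \<in> sets M" "U \<in> sets M"
  have "I n (U \<times> T) = (\<integral>z. indicator (U \<times> T) z * W n z \<partial>N)"
    unfolding I_def set_lebesgue_integral_def by simp
  also have "\<dots> = (\<integral>(x, y). indicator (U \<times> T) (y, x) * W n (y, x) \<partial>N)"
    using TU by (intro integral_product_swap[symmetric]) simp
  also have "\<dots> = (\<integral>z. indicator (T \<times> U) z * W n z \<partial>N)"
  proof (intro integral_cong_AE)
    show "AE z in N. (case z of (x, y) \<Rightarrow> indicator (U \<times> T) (y, x) * W n (y, x)) = indicator (T \<times> U) z * W n z"
      using symW[of n] by eventually_elim (auto simp: indicator_def)
  qed (use TU in auto)
  also have "\<dots> = I n (T \<times> U)"
    unfolding I_def set_lebesgue_integral_def by simp
  finally show ?thesis .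
qed

lemma Lr_swap: "T \<in> sets M \<Longrightarrow> U \<in> sets M \<Longrightarrow> Lr U T = Lr T U"
  unfolding Lr_def using I_swap by simp

lemma set_int_swap:
  fixes V :: "'a \<times> 'a \<Rightarrow> real"
  assumes V: "integrable N V" and TU: "T \<in> sets M" "U \<in> sets M"
  shows "(LINT z:T \<times> U|N. V (snd z, fst z)) = (LINT z:U \<times> T|N. V z)"
proof -
  have "(LINT z:U \<times> T|N. V z) = (\<integral>z. indicator (U \<times> T) z * V z \<partial>N)"
    unfolding set_lebesgue_integral_def by simp
  also have "\<dots> = (\<integral>(x, y). indicator (U \<times> T) (y, x) * V (y, x) \<partial>N)"
    using TU V by (intro integral_product_swap[symmetric]) simp
  also have "\<dots> = (LINT z:T \<times> U|N. V (snd z, fst z))"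
    unfolding set_lebesgue_integral_def by (intro Bochner_Integration.integral_cong) (auto simp: indicator_def)
  finally show ?thesis by simp
qed

lemma main_cs: "\<exists>V. graphon M V \<and> (\<lambda>n. cut_norm M (\<lambda>z. W n z - V z)) \<longlonglongrightarrow> 0"
proof -
  obtain V where V: "integrable N V" "\<And>F. F \<in> Fin \<Longrightarrow> (LINT z:F|N. V z) = lam F"
    using exists_V by blast
  define V' where "V' z = (V z + V (snd z, fst z)) / 2" for z
  have Vs: "integrable N (\<lambda>z. V (snd z, fst z))"
    using integrable_product_swap[OF V(1)] by (simp add: case_prod_beta')
  have V'i: "integrable N V'" unfolding V'_def using V(1) Vs by simp
  have V'r: "(LINT z:T \<times> U|N. V' z) = Lr T U" if TU: "T \<in> sets M" "U \<in> sets M" for T U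
  proof -
    have si1: "set_integrable N (T \<times> U) V" unfolding set_integrable_def
      using V(1) TU by (intro integrable_mult_indicator) auto
    have si2: "set_integrable N (T \<times> U) (\<lambda>z. V (snd z, fst z))" unfolding set_integrable_def
      using Vs TU by (intro integrable_mult_indicator) auto
    have "(LINT z:T \<times> U|N. V' z) = ((LINT z:T \<times> U|N. V z) + (LINT z:T \<times> U|N. V (snd z, fst z))) / 2"
      unfolding V'_def using si1 si2 by (simp add: set_integral_add(2))
    also have "\<dots> = (Lr T U + Lr U T) / 2"
      using rect_V[OF V TU] rect_V[OF V TU(2,1)] set_int_swap[OF V(1) TU] by simp
    also have "\<dots> = Lr T U" using Lr_swap[OF TU] by simp
    finally show ?thesis .
  qed
  have gr: "graphon M V'" unfolding graphon_def V'_def using V'i[unfolded V'_def] by simp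
  show ?thesis
  proof (intro exI[of _ V'] conjI gr LIMSEQ_I)
    fix e :: real assume e: "e > 0"
    from cauchy[of "e/2"] e obtain N0 where N0: "\<forall>m\<ge>N0. \<forall>n\<ge>N0. cut_norm M (\<lambda>z. W m z - W n z) < e/2" by auto
    show "\<exists>no. \<forall>n\<ge>no. norm (cut_norm M (\<lambda>z. W n z - V' z) - 0) < e"
    proof (intro exI[of _ N0] allI impI)
      fix n assume n: "n \<ge> N0"
      have int: "integrable N (\<lambda>z. W n z - V' z)" using intW V'i by simp
      have "cut_norm M (\<lambda>z. W n z - V' z) \<le> e/2"
      proof (rule cut_le)
        fix T U assume TU: "T \<in> sets M" "U \<in> sets M"
        have "(LINT z:T \<times> U|N. W n z - V' z) = I n (T \<times> U) - Lr T U"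
          unfolding I_def V'r[OF TU, symmetric] using TU
          using integrable_mult_indicator[OF _ V'i, of "T \<times> U"] TU
          by (intro set_integral_diff(2) sintW) (auto simp: set_integrable_def)
        moreover have "\<bar>I n (T \<times> U) - Lr T U\<bar> \<le> e/2"
        proof (rule LIMSEQ_le_const2)
          show "(\<lambda>m. \<bar>I n (T \<times> U) - I m (T \<times> U)\<bar>) \<longlonglongrightarrow> \<bar>I n (T \<times> U) - Lr T U\<bar>"
            by (intro tendsto_rabs tendsto_diff tendsto_const Lr_conv TU)
          show "\<exists>N. \<forall>m\<ge>N. \<bar>I n (T \<times> U) - I m (T \<times> U)\<bar> \<le> e/2"
          proof (intro exI[of _ N0] allI impI)
            fix m assume "m \<ge> N0"
            then have "cut_norm M (\<lambda>z. W n z - W m z) < e/2" using N0 n by auto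
            then show "\<bar>I n (T \<times> U) - I m (T \<times> U)\<bar> \<le> e/2" using I_rect_diff[OF TU, of n m] by simp
          qed
        qed
        ultimately show "\<bar>LINT z:T \<times> U|N. W n z - V' z\<bar> \<le> e/2" by simp
      qed
      moreover have "0 \<le> cut_norm M (\<lambda>z. W n z - V' z)" using int by (rule cut_nonneg)
      ultimately show "norm (cut_norm M (\<lambda>z. W n z - V' z) - 0) < e" using e by simp
    qed
  qed
qed

end


theorem mainTheorem7:
  fixes M :: "'a measure" and A :: "('a \<times> 'a \<Rightarrow> real) set"
  assumes "sigma_finite_measure M"
    and "\<forall>W\<in>A. graphon M W"
    and "unif_integrable M A"
  shows "\<forall>W :: nat \<Rightarrow> ('a \<times> 'a \<Rightarrow> real).
           (\<forall>n. W n \<in> A) \<longrightarrow>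
           (\<forall>e>0. \<exists>N. \<forall>m\<ge>N. \<forall>n\<ge>N. cut_norm M (\<lambda>z. W m z - W n z) < e) \<longrightarrow>
           (\<exists>V. graphon M V \<and> (\<lambda>n. cut_norm M (\<lambda>z. W n z - V z)) \<longlonglongrightarrow> 0)"
proof (intro allI impI)
  fix W :: "nat \<Rightarrow> ('a \<times> 'a \<Rightarrow> real)"
  assume WA: "\<forall>n. W n \<in> A"
    and cau: "\<forall>e>0. \<exists>N. \<forall>m\<ge>N. \<forall>n\<ge>N. cut_norm M (\<lambda>z. W m z - W n z) < e"
  from assms(3) obtain C where C: "\<forall>F\<in>A. (LINT z|(M \<Otimes>\<^sub>M M). \<bar>F z\<bar>) \<le> C"
    and ui: "\<forall>e>0. \<exists>B0. \<forall>B\<ge>B0. \<forall>F\<in>A.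
        (LINT z:{z \<in> space (M \<Otimes>\<^sub>M M). \<bar>F z\<bar> > B}|(M \<Otimes>\<^sub>M M). \<bar>F z\<bar>) \<le> e"
    unfolding unif_integrable_def by blast
  have gW: "graphon M (W n)" for n using assms(2) WA by blast
  have "cs M W C"
  proof (rule cs.intro)
    show "pair_sigma_finite M M" unfolding pair_sigma_finite_def using assms(1) by simp
    show "cs_axioms M W C"
    proof (rule cs_axioms.intro)
      show "\<And>n. integrable (M \<Otimes>\<^sub>M M) (W n)" using gW unfolding graphon_def by blast
      show "\<And>n. AE z in M \<Otimes>\<^sub>M M. W n (snd z, fst z) = W n z" using gW unfolding graphon_def by blast
      show "\<And>n. (LINT z|(M \<Otimes>\<^sub>M M). \<bar>W n z\<bar>) \<le> C" using C WA by blast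
      show "\<exists>B0. \<forall>B\<ge>B0. \<forall>n.
        (LINT z:{z \<in> space (M \<Otimes>\<^sub>M M). \<bar>W n z\<bar> > B}|(M \<Otimes>\<^sub>M M). \<bar>W n z\<bar>) \<le> e"
        if e: "e > 0" for e
      proof -
        obtain B0 where B0: "\<forall>B\<ge>B0. \<forall>F\<in>A.
            (LINT z:{z \<in> space (M \<Otimes>\<^sub>M M). \<bar>F z\<bar> > B}|(M \<Otimes>\<^sub>M M). \<bar>F z\<bar>) \<le> e"
          using ui e by blast
        show ?thesis using B0 WA by (intro exI[of _ B0] allI impI) blast
      qed
      show "\<And>e. e > 0 \<Longrightarrow> \<exists>N. \<forall>m\<ge>N. \<forall>n\<ge>N. cut_norm M (\<lambda>z. W m z - W n z) < e"
        using cau by blast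
    qed
  qed
  then interpret cs M W C .
  show "\<exists>V. graphon M V \<and> (\<lambda>n. cut_norm M (\<lambda>z. W n z - V z)) \<longlonglongrightarrow> 0" by (rule main_cs)
qed

end
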